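(* Let $A=\{a_1,\dots,a_{3k}\}$ be an instance of 3-PARTITION with $a^2$ divisible by $7$, and let $G(A)$ be the bipartite network constructed from $A$ as described in the context. In any division of $G(A)$ with maximal bipartite modularity, every community contains at most one of the bicliques $K_1,\dots,K_k$.
   Context: An instance of 3-PARTITION is a set of $3k$ positive integers $A=\{a_1,\dots,a_{3k}\}$ such that $a=\sum_{i=1}^{3k}a_i=kb$ and $b/4<a_i<b/2$ for all $i$, for some integer $b$. The bipartite network $G(A)$ (vertices colored red/blue, every edge joining a red and a blue vertex) is built as follows. (1) Construct $k$ complete bipartite networks (bicliques) $K_1,\dots,K_k$, each with $a$ red and $a$ blue vertices. (2) For each $i=1,\dots,3k$ add a red vertex $x_i$ and a blue vertex $y_i$ (element vertices). (3) For each $i$, connect $x_i$ to $a_i$ blue vertices in each of the $k$ bicliques, in such a way that each blue vertex of every biclique is adjacent to exactly one red element vertex; similarly connect $y_i$ to $a_i$ red vertices in each biclique so that each red vertex of every biclique is adjacent to exactly one blue element vertex. (4) For each $i$, add the edge $x_iy_i$. (5) For each $i$, construct a star $X_i$ with one blue internal vertex and $a^2/7$ red leaves, and a star $Y_i$ with one red internal vertex and $a^2/7$ blue leaves. (6) For each $i$, connect $x_i$ to the internal vertex of $X_i$ and $y_i$ to the internal vertex of $Y_i$. A division of the vertex set is a partition into communities. With $m$ the number of edges, Barber's bipartite modularity is $Q_b(\mathcal{C})=\sum_{C\in\mathcal{C}}\left(\frac{m_C}{m}-\frac{R_CB_C}{m^2}\right)$, where $m_C$ is the number of edges inside $C$ and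 $R_C$ (resp. $B_C$) is the sum of degrees of red (resp. blue) vertices in $C$. A division with maximal bipartite modularity is one maximizing $Q_b$ over all divisions. A community "contains" a biclique $K_t$ if all vertices of $K_t$ lie in it. *)

theory Defs
  imports Main "HOL.Real"
begin

text \<open>A bipartite network is given by a set of red vertices Rd, a set of blue
vertices Bl and an edge set E of (red, blue) pairs.\<close>

definition degree :: "('v \<times> 'v) set \<Rightarrow> 'v \<Rightarrow> nat" where
  "degree E v = card {e \<in> E. fst e = v \<or> snd e = v}"

definition is_division :: "'v set \<Rightarrow> 'v set set \<Rightarrow> bool" where
  "is_division V P \<longleftrightarrow> \<Union>P = V \<and> (\<forall>C\<in>P. C \<noteq> {}) \<and>
     (\<forall>C\<in>P. \<forall>D\<in>P. C \<noteq> D \<longrightarrow> C \<inter> D = {})"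

definition bip_modularity ::
  "'v set \<Rightarrow> 'v set \<Rightarrow> ('v \<times> 'v) set \<Rightarrow> 'v set set \<Rightarrow> real" where
  "bip_modularity Rd Bl E P =
     (let m = real (card E) in
      \<Sum>C\<in>P. real (card {e \<in> E. fst e \<in> C \<and> snd e \<in> C}) / m
            - (\<Sum>v\<in>C \<inter> Rd. real (degree E v)) * (\<Sum>v\<in>C \<inter> Bl. real (degree E v)) / m^2)"

definition max_modularity_division ::
  "'v set \<Rightarrow> 'v set \<Rightarrow> ('v \<times> 'v) set \<Rightarrow> 'v set set \<Rightarrow> bool" where
  "max_modularity_division Rd Bl E P \<longleftrightarrow>
     is_division (Rd \<union> Bl) P \<and>
     (\<forall>P'. is_division (Rd \<union> Bl) P' \<longrightarrow> bip_modularity Rd Bl E P' \<le> bip_modularity Rd Bl E P)"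

text \<open>The 3k integers are indexed as a 0, ..., a (3k-1).\<close>

definition three_partition_instance :: "nat \<Rightarrow> (nat \<Rightarrow> nat) \<Rightarrow> nat \<Rightarrow> bool" where
  "three_partition_instance k a b \<longleftrightarrow>
     (\<forall>i<3*k. 0 < a i) \<and> (\<Sum>i<3*k. a i) = k * b \<and>
     (\<forall>i<3*k. real b / 4 < real (a i) \<and> real (a i) < real b / 2)"

text \<open>Vertices: KR t j / KB t j are the red / blue vertices j of biclique K_t;
XV i, YV i are the element vertices x_i, y_i; XC i is the (blue) centre of star X_i,
XL i l its red leaves; YC i is the (red) centre of star Y_i, YL i l its blue leaves.\<close>

datatype vtx = KR nat nat | KB nat nat | XV nat | YV nat
  | XC nat | XL nat nat | YC nat | YL nat nat

definition GA_red :: "nat \<Rightarrow> nat \<Rightarrow> nat \<Rightarrow> vtx set" where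
  "GA_red k S L =
     {KR t j |t j. t < k \<and> j < S} \<union> {XV i |i. i < 3*k} \<union>
     {XL i l |i l. i < 3*k \<and> l < L} \<union> {YC i |i. i < 3*k}"

definition GA_blue :: "nat \<Rightarrow> nat \<Rightarrow> nat \<Rightarrow> vtx set" where
  "GA_blue k S L =
     {KB t j |t j. t < k \<and> j < S} \<union> {YV i |i. i < 3*k} \<union>
     {YL i l |i l. i < 3*k \<and> l < L} \<union> {XC i |i. i < 3*k}"

text \<open>f t j is the index i of the red element vertex x_i adjacent to blue vertex KB t j;
g t j is the index i of the blue element vertex y_i adjacent to red vertex KR t j.\<close>

definition GA_edges ::
  "nat \<Rightarrow> nat \<Rightarrow> nat \<Rightarrow> (nat \<Rightarrow> nat \<Rightarrow> nat) \<Rightarrow> (nat \<Rightarrow> nat \<Rightarrow> nat) \<Rightarrow> (vtx \<times> vtx) set" where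
  "GA_edges k S L f g =
     {(KR t j, KB t j') |t j j'. t < k \<and> j < S \<and> j' < S} \<union>
     {(XV (f t j), KB t j) |t j. t < k \<and> j < S} \<union>
     {(KR t j, YV (g t j)) |t j. t < k \<and> j < S} \<union>
     {(XV i, YV i) |i. i < 3*k} \<union>
     {(XV i, XC i) |i. i < 3*k} \<union>
     {(XL i l, XC i) |i l. i < 3*k \<and> l < L} \<union>
     {(YC i, YV i) |i. i < 3*k} \<union>
     {(YC i, YL i l) |i l. i < 3*k \<and> l < L}"

definition valid_attachment :: "nat \<Rightarrow> (nat \<Rightarrow> nat) \<Rightarrow> nat \<Rightarrow> (nat \<Rightarrow> nat \<Rightarrow> nat) \<Rightarrow> bool" where
  "valid_attachment k a S f \<longleftrightarrow>
     (\<forall>t<k. \<forall>j<S. f t j < 3*k) \<and>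
     (\<forall>t<k. \<forall>i<3*k. card {j. j < S \<and> f t j = i} = a i)"

definition biclique_vertices :: "nat \<Rightarrow> nat \<Rightarrow> vtx set" where
  "biclique_vertices S t = {KR t j |j. j < S} \<union> {KB t j |j. j < S}"

end

theory Submission
  imports Defs
begin


definition inE :: "('v\<times>'v) set \<Rightarrow> 'v set \<Rightarrow> ('v\<times>'v) set" where
 "inE E C = {e \<in> E. fst e \<in> C \<and> snd e \<in> C}"
definition wt :: "('v\<times>'v) set \<Rightarrow> 'v set \<Rightarrow> 'v set \<Rightarrow> real" where
 "wt E X C = (\<Sum>v\<in>C \<inter> X. real (degree E v))"

lemma split_improves:
  fixes Rd Bl :: "'v set" and E :: "('v\<times>'v) set"
  assumes fin: "finite Rd" "finite Bl" "finite E"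
    and divP: "is_division (Rd \<union> Bl) P" and CP: "C \<in> P" and DC: "D \<subseteq> C"
    and Dne: "D \<noteq> {}" and C1ne: "C - D \<noteq> {}" and m0: "card E > 0"
    and ineq: "real (card {e\<in>E. (fst e \<in> C - D \<and> snd e \<in> D) \<or> (fst e \<in> D \<and> snd e \<in> C - D)}) * real (card E)
        < wt E Rd (C - D) * wt E Bl D + wt E Rd D * wt E Bl (C - D)"
  shows "\<not> max_modularity_division Rd Bl E P"
proof
  assume mx: "max_modularity_division Rd Bl E P"
  define m where "m = real (card E)"
  have mpos: "m > 0" using m0 m_def by simp
  define T where "T X = real (card (inE E X)) / m - wt E Rd X * wt E Bl X / m^2" for X
  have bm: "bip_modularity Rd Bl E Q = (\<Sum>X\<in>Q. T X)" for Q
    unfolding bip_modularity_def T_def inE_def wt_def m_def Let_def by simp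
  have PV: "P \<subseteq> Pow (Rd \<union> Bl)" using divP unfolding is_division_def by auto
  have finP: "finite P" using PV fin finite_subset by (meson finite_Pow_iff finite_UnI)
  have CV: "C \<subseteq> Rd \<union> Bl" using PV CP by auto
  define C1 where "C1 = C - D"
  define P' where "P' = insert C1 (insert D (P - {C}))"
  have C1notP: "C1 \<notin> P"
  proof
    assume "C1 \<in> P"
    moreover have "C1 \<noteq> C" using Dne DC C1_def by auto
    ultimately have "C1 \<inter> C = {}" using divP CP unfolding is_division_def by blast
    thus False using C1ne C1_def by auto
  qed
  have DnotP: "D \<notin> P"
  proof
    assume "D \<in> P"
    moreover have "D \<noteq> C" using C1ne C1_def by auto
    ultimately have "D \<inter> C = {}" using divP CP unfolding is_division_def by blast
    thus False using Dne DC by auto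
  qed
  have C1D: "C1 \<noteq> D" using Dne C1_def by auto
  have divP': "is_division (Rd \<union> Bl) P'"
  proof -
    have "\<Union>P' = \<Union>P" using CP DC unfolding P'_def C1_def by auto
    moreover have "\<forall>X\<in>P'. X \<noteq> {}" using divP Dne C1ne C1_def unfolding P'_def is_division_def by auto
    moreover have "\<forall>X\<in>P'. \<forall>Y\<in>P'. X \<noteq> Y \<longrightarrow> X \<inter> Y = {}"
    proof (intro ballI impI)
      fix X Y assume X: "X \<in> P'" and Y: "Y \<in> P'" and XY: "X \<noteq> Y"
      have sub: "Z \<in> P' \<Longrightarrow> Z \<in> P - {C} \<or> Z \<subseteq> C" for Z unfolding P'_def C1_def using DC by auto
      have disj: "Z \<in> P - {C} \<Longrightarrow> Z \<inter> C = {}" for Z using divP CP unfolding is_division_def by blast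
      show "X \<inter> Y = {}"
      proof (cases "X \<in> P - {C}")
        case True
        show ?thesis
        proof (cases "Y \<in> P - {C}")
          case True2: True
          then show ?thesis using True XY divP unfolding is_division_def by blast
        next
          case False
          then have "Y \<subseteq> C" using sub Y by blast
          then show ?thesis using disj True by blast
        qed
      next
        case False
        then have XC: "X \<subseteq> C" using sub X by blast
        show ?thesis
        proof (cases "Y \<in> P - {C}")
          case True
          then show ?thesis using disj XC by blast
        next
          case False2: False
          have "X \<in> {C1, D}" using X False unfolding P'_def by auto
          moreover have "Y \<in> {C1, D}" using Y False2 unfolding P'_def by auto
          ultimately show ?thesis using XY C1_def by auto
        qed
      qed
    qed
    ultimately show ?thesis using divP unfolding is_division_def by simp
  qed
  have le: "bip_modularity Rd Bl E P' \<le> bip_modularity Rd Bl E P" using mx divP' unfolding max_modularity_division_def by blast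
  have s1: "(\<Sum>X\<in>P'. T X) = T C1 + T D + (\<Sum>X\<in>P - {C}. T X)"
    unfolding P'_def using finP C1notP DnotP C1D by (simp add: sum.insert)
  have s2: "(\<Sum>X\<in>P. T X) = T C + (\<Sum>X\<in>P - {C}. T X)"
    using finP CP by (simp add: sum.remove)
  define cross where "cross = {e\<in>E. (fst e \<in> C1 \<and> snd e \<in> D) \<or> (fst e \<in> D \<and> snd e \<in> C1)}"
  have eq: "inE E C = inE E C1 \<union> inE E D \<union> cross"
    unfolding inE_def cross_def C1_def using DC by auto
  have fi: "finite (inE E X)" for X unfolding inE_def using fin by simp
  have fc: "finite cross" unfolding cross_def using fin by simp
  have cardC: "card (inE E C) = card (inE E C1) + card (inE E D) + card cross"
  proof -
    have d1: "inE E C1 \<inter> inE E D = {}" unfolding inE_def C1_def by auto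
    have d2: "(inE E C1 \<union> inE E D) \<inter> cross = {}" unfolding inE_def cross_def C1_def by auto
    have "card (inE E C1 \<union> inE E D \<union> cross) = card (inE E C1 \<union> inE E D) + card cross"
      using d2 fi fc by (simp add: card_Un_disjoint)
    also have "card (inE E C1 \<union> inE E D) = card (inE E C1) + card (inE E D)"
      using d1 fi by (simp add: card_Un_disjoint)
    finally show ?thesis unfolding eq .
  qed
  have wsplit: "wt E X C = wt E X C1 + wt E X D" if "X \<subseteq> Rd \<union> Bl" for X
  proof -
    have "finite (C \<inter> X)" using fin that by (meson finite_Int finite_UnI finite_subset)
    moreover have "C \<inter> X = (C1 \<inter> X) \<union> (D \<inter> X)" using DC C1_def by auto
    moreover have "(C1 \<inter> X) \<inter> (D \<inter> X) = {}" using C1_def by auto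
    ultimately show ?thesis unfolding wt_def by (metis finite_Un sum.union_disjoint)
  qed
  have wR: "wt E Rd C = wt E Rd C1 + wt E Rd D" using wsplit by auto
  have wB: "wt E Bl C = wt E Bl C1 + wt E Bl D" using wsplit by auto
  have "T C1 + T D - T C = (wt E Rd C1 * wt E Bl D + wt E Rd D * wt E Bl C1) / m^2 - real (card cross) / m"
    unfolding T_def cardC wR wB using mpos by (simp add: field_simps power2_eq_square)
  also have "... > 0"
  proof -
    have "real (card cross) * m < wt E Rd C1 * wt E Bl D + wt E Rd D * wt E Bl C1"
      using ineq unfolding cross_def m_def C1_def by simp
    hence "real (card cross) / m < (wt E Rd C1 * wt E Bl D + wt E Rd D * wt E Bl C1) / m^2"
      using mpos by (simp add: field_simps power2_eq_square)
    thus ?thesis by simp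
  qed
  finally have "T C1 + T D - T C > 0" .
  hence "bip_modularity Rd Bl E P' > bip_modularity Rd Bl E P" unfolding bm s1 s2 by simp
  thus False using le by simp
qed



lemma E_eq: "GA_edges k S L f g =
   (\<lambda>(t,j,j'). (KR t j, KB t j')) ` ({..<k} \<times> {..<S} \<times> {..<S}) \<union>
   (\<lambda>(t,j). (XV (f t j), KB t j)) ` ({..<k} \<times> {..<S}) \<union>
   (\<lambda>(t,j). (KR t j, YV (g t j))) ` ({..<k} \<times> {..<S}) \<union>
   (\<lambda>i. (XV i, YV i)) ` {..<3*k} \<union>
   (\<lambda>i. (XV i, XC i)) ` {..<3*k} \<union>
   (\<lambda>(i,l). (XL i l, XC i)) ` ({..<3*k} \<times> {..<L}) \<union>
   (\<lambda>i. (YC i, YV i)) ` {..<3*k} \<union>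
   (\<lambda>(i,l). (YC i, YL i l)) ` ({..<3*k} \<times> {..<L})"
  unfolding GA_edges_def by (auto simp: image_def)

lemma finE: "finite (GA_edges k S L f g)"
  unfolding E_eq by auto

lemma cardE: "card (GA_edges k S L f g) \<le> k*S*S + k*S + k*S + 3*k + 3*k + 3*k*L + 3*k + 3*k*L"
proof -
  define A1 where "A1 = (\<lambda>(t,j,j'). (KR t j, KB t j')) ` ({..<k} \<times> {..<S} \<times> {..<S})"
  define A2 where "A2 = (\<lambda>(t,j). (XV (f t j), KB t j)) ` ({..<k} \<times> {..<S})"
  define A3 where "A3 = (\<lambda>(t,j). (KR t j, YV (g t j))) ` ({..<k} \<times> {..<S})"
  define A4 where "A4 = (\<lambda>i. (XV i, YV i)) ` {..<3*k}"
  define A5 where "A5 = (\<lambda>i. (XV i, XC i)) ` {..<3*k}"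
  define A6 where "A6 = (\<lambda>(i,l). (XL i l, XC i)) ` ({..<3*k} \<times> {..<L})"
  define A7 where "A7 = (\<lambda>i. (YC i, YV i)) ` {..<3*k}"
  define A8 where "A8 = (\<lambda>(i,l). (YC i, YL i l)) ` ({..<3*k} \<times> {..<L})"
  have e: "GA_edges k S L f g = A1 \<union> A2 \<union> A3 \<union> A4 \<union> A5 \<union> A6 \<union> A7 \<union> A8"
    unfolding E_eq A1_def A2_def A3_def A4_def A5_def A6_def A7_def A8_def by simp
  have c1: "card A1 \<le> k*S*S" unfolding A1_def by (rule order_trans[OF card_image_le]) (simp_all add: card_cartesian_product)
  have c2: "card A2 \<le> k*S" unfolding A2_def by (rule order_trans[OF card_image_le]) (simp_all add: card_cartesian_product)
  have c3: "card A3 \<le> k*S" unfolding A3_def by (rule order_trans[OF card_image_le]) (simp_all add: card_cartesian_product)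
  have c4: "card A4 \<le> 3*k" unfolding A4_def by (rule order_trans[OF card_image_le]) (simp_all add: card_cartesian_product)
  have c5: "card A5 \<le> 3*k" unfolding A5_def by (rule order_trans[OF card_image_le]) (simp_all add: card_cartesian_product)
  have c6: "card A6 \<le> 3*k*L" unfolding A6_def by (rule order_trans[OF card_image_le]) (simp_all add: card_cartesian_product)
  have c7: "card A7 \<le> 3*k" unfolding A7_def by (rule order_trans[OF card_image_le]) (simp_all add: card_cartesian_product)
  have c8: "card A8 \<le> 3*k*L" unfolding A8_def by (rule order_trans[OF card_image_le]) (simp_all add: card_cartesian_product)
  have u: "card (X \<union> Y) \<le> card X + card Y" for X Y :: "(vtx\<times>vtx) set" by (rule card_Un_le)
  show ?thesis unfolding e
    using u[of "A1 \<union> A2 \<union> A3 \<union> A4 \<union> A5 \<union> A6 \<union> A7" A8] u[of "A1 \<union> A2 \<union> A3 \<union> A4 \<union> A5 \<union> A6" A7]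
      u[of "A1 \<union> A2 \<union> A3 \<union> A4 \<union> A5" A6] u[of "A1 \<union> A2 \<union> A3 \<union> A4" A5] u[of "A1 \<union> A2 \<union> A3" A4]
      u[of "A1 \<union> A2" A3] u[of A1 A2] c1 c2 c3 c4 c5 c6 c7 c8 by linarith
qed

lemma finRd: "finite (GA_red k S L)"
proof -
  have "GA_red k S L = (\<lambda>(t,j). KR t j) ` ({..<k} \<times> {..<S}) \<union> XV ` {..<3*k} \<union>
     (\<lambda>(i,l). XL i l) ` ({..<3*k} \<times> {..<L}) \<union> YC ` {..<3*k}"
    unfolding GA_red_def by (auto simp: image_def)
  thus ?thesis by auto
qed

lemma finBl: "finite (GA_blue k S L)"
proof -
  have "GA_blue k S L = (\<lambda>(t,j). KB t j) ` ({..<k} \<times> {..<S}) \<union> YV ` {..<3*k} \<union>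
     (\<lambda>(i,l). YL i l) ` ({..<3*k} \<times> {..<L}) \<union> XC ` {..<3*k}"
    unfolding GA_blue_def by (auto simp: image_def)
  thus ?thesis by auto
qed

lemma memKK: assumes "t < k" "j < S" "j' < S"
  shows "(KR t j, KB t j') \<in> GA_edges k S L f g"
proof -
  have "(KR t j, KB t j') \<in> (\<lambda>(t,j,j'). (KR t j, KB t j')) ` ({..<k} \<times> {..<S} \<times> {..<S})"
    using assms by (intro image_eqI[where x="(t,j,j')"]) auto
  thus ?thesis unfolding E_eq by (intro UnI1)
qed

lemma degKR: assumes "t < k" "j < S" shows "S \<le> degree (GA_edges k S L f g) (KR t j)"
proof -
  let ?A = "(\<lambda>j'. (KR t j, KB t j')) ` {..<S}"
  let ?B = "{e \<in> GA_edges k S L f g. fst e = KR t j \<or> snd e = KR t j}"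
  have sub: "?A \<subseteq> ?B"
  proof
    fix x assume "x \<in> ?A"
    then obtain j' where j': "j' < S" "x = (KR t j, KB t j')" by blast
    show "x \<in> ?B" using memKK[of t k j S j' L f g] memKK[of t k j' S j L f g] assms j' by simp
  qed
  have fin: "finite ?B" using finE[of k S L f g] by simp
  have "S = card ?A" by (simp add: card_image inj_on_def)
  also have "... \<le> card ?B" by (rule card_mono[OF fin sub])
  finally show ?thesis unfolding degree_def .
qed

lemma degKB: assumes "t < k" "j < S" shows "S \<le> degree (GA_edges k S L f g) (KB t j)"
proof -
  let ?A = "(\<lambda>j'. (KR t j', KB t j)) ` {..<S}"
  let ?B = "{e \<in> GA_edges k S L f g. fst e = KB t j \<or> snd e = KB t j}"
  have sub: "?A \<subseteq> ?B"
  proof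
    fix x assume "x \<in> ?A"
    then obtain j' where j': "j' < S" "x = (KR t j', KB t j)" by blast
    show "x \<in> ?B" using memKK[of t k j S j' L f g] memKK[of t k j' S j L f g] assms j' by simp
  qed
  have fin: "finite ?B" using finE[of k S L f g] by simp
  have "S = card ?A" by (simp add: card_image inj_on_def)
  also have "... \<le> card ?B" by (rule card_mono[OF fin sub])
  finally show ?thesis unfolding degree_def .
qed

lemma cross_le: assumes "t < k"
  shows "card {e\<in>GA_edges k S L f g. (fst e \<in> C - biclique_vertices S t \<and> snd e \<in> biclique_vertices S t)
        \<or> (fst e \<in> biclique_vertices S t \<and> snd e \<in> C - biclique_vertices S t)} \<le> 2*S"
proof -
  have "{e\<in>GA_edges k S L f g. (fst e \<in> C - biclique_vertices S t \<and> snd e \<in> biclique_vertices S t)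
        \<or> (fst e \<in> biclique_vertices S t \<and> snd e \<in> C - biclique_vertices S t)}
     \<subseteq> (\<lambda>j. (KR t j, YV (g t j))) ` {..<S} \<union> (\<lambda>j. (XV (f t j), KB t j)) ` {..<S}"
    unfolding GA_edges_def biclique_vertices_def by auto
  moreover have "card ((\<lambda>j. (KR t j, YV (g t j))) ` {..<S} \<union> (\<lambda>j. (XV (f t j), KB t j)) ` {..<S}) \<le> 2*S"
    by (metis (no_types, lifting) card_Un_le card_image_le card_lessThan finite_lessThan mult_2 add_mono order_trans)
  ultimately show ?thesis by (meson card_mono finite_UnI finite_imageI finite_lessThan order_trans)
qed

lemma wt_lo_R: assumes "s < k" "{KR s j |j. j < S} \<subseteq> X" "finite X"
  shows "real S * real S \<le> wt (GA_edges k S L f g) (GA_red k S L) X"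
proof -
  let ?E = "GA_edges k S L f g"
  have sub1: "KR s ` {..<S} \<subseteq> X" using assms(2) by blast
  have sub2: "KR s ` {..<S} \<subseteq> GA_red k S L" using assms(1) unfolding GA_red_def by blast
  have sub: "KR s ` {..<S} \<subseteq> X \<inter> GA_red k S L" using sub1 sub2 by blast
  have "real S * real S = (\<Sum>v\<in>KR s ` {..<S}. real S)" by (simp add: card_image inj_on_def)
  also have "... \<le> (\<Sum>v\<in>KR s ` {..<S}. real (degree ?E v))"
    by (rule sum_mono) (use degKR[OF assms(1)] in auto)
  also have "... \<le> (\<Sum>v\<in>X \<inter> GA_red k S L. real (degree ?E v))"
    by (rule sum_mono2) (use sub assms(3) in auto)
  finally show ?thesis unfolding wt_def .
qed

lemma wt_lo_B: assumes "s < k" "{KB s j |j. j < S} \<subseteq> X" "finite X"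
  shows "real S * real S \<le> wt (GA_edges k S L f g) (GA_blue k S L) X"
proof -
  let ?E = "GA_edges k S L f g"
  have sub1: "KB s ` {..<S} \<subseteq> X" using assms(2) by blast
  have sub2: "KB s ` {..<S} \<subseteq> GA_blue k S L" using assms(1) unfolding GA_blue_def by blast
  have sub: "KB s ` {..<S} \<subseteq> X \<inter> GA_blue k S L" using sub1 sub2 by blast
  have "real S * real S = (\<Sum>v\<in>KB s ` {..<S}. real S)" by (simp add: card_image inj_on_def)
  also have "... \<le> (\<Sum>v\<in>KB s ` {..<S}. real (degree ?E v))"
    by (rule sum_mono) (use degKB[OF assms(1)] in auto)
  also have "... \<le> (\<Sum>v\<in>X \<inter> GA_blue k S L. real (degree ?E v))"
    by (rule sum_mono2) (use sub assms(3) in auto)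
  finally show ?thesis unfolding wt_def .
qed

lemma arith_main:
  fixes k b S L m :: nat
  assumes "S = k*b" "b \<ge> 3" "k \<ge> 2" "7*L \<le> S^2"
    and "m \<le> k*S*S + k*S + k*S + 3*k + 3*k + 3*k*L + 3*k + 3*k*L"
  shows "m < S*S*S"
proof -
  have S6: "S \<ge> 6" using mult_le_mono[OF assms(3) assms(2)] assms(1) by simp
  have S3k: "S \<ge> 3*k" using assms(1,2) by simp
  have "7*m \<le> 7*(k*S*S) + 14*(k*S) + 63*k + 6*k*(7*L)" using assms(5) by linarith
  also have "... \<le> 7*(k*S*S) + 14*(k*S) + 63*k + 6*k*(S*S)" using assms(4) by (simp add: power2_eq_square)
  also have "... = 13*(k*S*S) + 14*(k*S) + 63*k" by (simp add: algebra_simps)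
  also have "... < 21*(k*S*S)"
  proof -
    have "6*(k*S) \<le> S*(k*S)" using S6 by (rule mult_right_mono) simp
    hence a: "48*(k*S) \<le> 8*(k*S*S)" by (simp add: algebra_simps)
    have "6*k \<le> k*S" using S6 by simp
    hence "34*6*k \<le> 34*(k*S)" by simp
    moreover have "k > 0" using assms(3) by simp
    ultimately show ?thesis using a by linarith
  qed
  also have "... = 7*((3*k)*S*S)" by simp
  also have "... \<le> 7*(S*S*S)" using S3k by (simp add: mult_right_mono)
  finally show ?thesis by simp
qed


theorem lemma2:
  fixes k b :: nat and a :: "nat \<Rightarrow> nat" and f g :: "nat \<Rightarrow> nat \<Rightarrow> nat"
    and P :: "vtx set set"
  assumes inst: "three_partition_instance k a b"
    and div7: "(7::nat) dvd (\<Sum>i<3*k. a i)^2"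
    and f: "valid_attachment k a (\<Sum>i<3*k. a i) f"
    and g: "valid_attachment k a (\<Sum>i<3*k. a i) g"
    and maxP: "max_modularity_division
                 (GA_red k (\<Sum>i<3*k. a i) ((\<Sum>i<3*k. a i)^2 div 7))
                 (GA_blue k (\<Sum>i<3*k. a i) ((\<Sum>i<3*k. a i)^2 div 7))
                 (GA_edges k (\<Sum>i<3*k. a i) ((\<Sum>i<3*k. a i)^2 div 7) f g) P"
  shows "\<forall>C\<in>P. card {t. t < k \<and> biclique_vertices (\<Sum>i<3*k. a i) t \<subseteq> C} \<le> 1"
proof
  fix C assume CP: "C \<in> P"
  define S where "S = (\<Sum>i<3*k. a i)"
  define L where "L = S^2 div 7"
  define Rd where "Rd = GA_red k S L"
  define Bl where "Bl = GA_blue k S L"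
  define E where "E = GA_edges k S L f g"
  have mx: "max_modularity_division Rd Bl E P" using maxP unfolding Rd_def Bl_def E_def L_def S_def .
  show "card {t. t < k \<and> biclique_vertices (\<Sum>i<3*k. a i) t \<subseteq> C} \<le> 1"
  proof (rule ccontr)
    assume neg: "\<not> ?thesis"
    define T where "T = {t. t < k \<and> biclique_vertices S t \<subseteq> C}"
    have finT: "finite T" unfolding T_def by simp
    have nc: "\<not> card T \<le> Suc 0" using neg unfolding T_def S_def by simp
    have "\<not> (\<forall>a1\<in>T. \<forall>a2\<in>T. a1 = a2)" using nc by (simp add: card_le_Suc0_iff_eq[OF finT])
    then obtain s t where st: "s < k" "t < k" "s \<noteq> t" "biclique_vertices S s \<subseteq> C" "biclique_vertices S t \<subseteq> C"
      unfolding T_def by blast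
    have k2: "k \<ge> 2" using st by linarith
    have SK: "S = k*b" using inst unfolding three_partition_instance_def S_def by simp
    have i0: "0 < 3*k" using k2 by simp
    have A1: "\<forall>i<3*k. 0 < a i" using inst unfolding three_partition_instance_def by blast
    have A2: "\<forall>i<3*k. real b / 4 < real (a i) \<and> real (a i) < real b / 2"
      using inst unfolding three_partition_instance_def by blast
    have "real (a 0) < real b / 2" using A2 i0 by blast
    moreover have "0 < a 0" using A1 i0 by blast
    hence "real (a 0) \<ge> 1" by simp
    ultimately have "real b > 2" by linarith
    hence b3: "b \<ge> 3" by simp
    have Spos: "S > 0" using SK b3 k2 by simp
    define D where "D = biclique_vertices S t"
    have divP: "is_division (Rd \<union> Bl) P" using mx unfolding max_modularity_division_def by simp
    have CV: "C \<subseteq> Rd \<union> Bl" using divP CP unfolding is_division_def by blast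
    have finC: "finite C" using CV finRd finBl Rd_def Bl_def by (meson finite_UnI finite_subset)
    have finD: "finite D" using st(5) finC D_def finite_subset by blast
    have DC: "D \<subseteq> C" using st D_def by simp
    have KR_D: "KR t 0 \<in> D" using Spos unfolding D_def biclique_vertices_def by blast
    have "KR s 0 \<in> C" using Spos st(4) unfolding biclique_vertices_def by blast
    moreover have "KR s 0 \<notin> D" using st(3) unfolding D_def biclique_vertices_def by blast
    ultimately have KR_C1: "KR s 0 \<in> C - D" by blast
    have E0: "(KR 0 0, KB 0 0) \<in> E" using Spos k2 memKK[of 0 k 0 S 0 L f g] unfolding E_def by simp
    have finE': "finite E" unfolding E_def by (rule finE)
    have m0: "card E > 0" using E0 finE' card_gt_0_iff by blast
    have cr: "card {e\<in>E. (fst e \<in> C - D \<and> snd e \<in> D) \<or> (fst e \<in> D \<and> snd e \<in> C - D)} \<le> 2*S"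
      unfolding E_def D_def by (rule cross_le[OF st(2)])
    have L7: "7 * L = S^2" using div7 unfolding L_def S_def by simp
    have mS: "card E < S*S*S"
      by (rule arith_main[OF SK b3 k2]) (use cardE[of k S L f g] L7 in \<open>simp_all add: E_def\<close>)
    have w1: "real S * real S \<le> wt E Rd (C - D)"
      unfolding E_def Rd_def by (rule wt_lo_R[OF st(1)]) (use st finC in \<open>auto simp: D_def biclique_vertices_def\<close>)
    have w2: "real S * real S \<le> wt E Bl D"
      unfolding E_def Bl_def by (rule wt_lo_B[OF st(2)]) (use finD in \<open>auto simp: D_def biclique_vertices_def\<close>)
    have w3: "real S * real S \<le> wt E Rd D"
      unfolding E_def Rd_def by (rule wt_lo_R[OF st(2)]) (use finD in \<open>auto simp: D_def biclique_vertices_def\<close>)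
    have w4: "real S * real S \<le> wt E Bl (C - D)"
      unfolding E_def Bl_def by (rule wt_lo_B[OF st(1)]) (use st finC in \<open>auto simp: D_def biclique_vertices_def\<close>)
    define X where "X = real (card {e\<in>E. (fst e \<in> C - D \<and> snd e \<in> D) \<or> (fst e \<in> D \<and> snd e \<in> C - D)})"
    define Y where "Y = real S * real S"
    have X: "X \<le> 2 * real S" using cr unfolding X_def by linarith
    have "real (card E) < real (S*S*S)" using mS by (simp only: of_nat_less_iff)
    hence mSr: "real (card E) < real S * real S * real S" by simp
    have "X * real (card E) \<le> 2 * real S * real (card E)" using X by (simp add: mult_right_mono)
    also have "... < 2 * real S * (real S * real S * real S)" using mSr Spos by (intro mult_strict_left_mono) auto
    also have "... = Y * Y + Y * Y" unfolding Y_def by (simp add: algebra_simps)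
    also have "... \<le> wt E Rd (C - D) * wt E Bl D + wt E Rd D * wt E Bl (C - D)"
    proof -
      have Y0: "Y \<ge> 0" unfolding Y_def by simp
      have nn: "0 \<le> real S * real S" by simp
      have "Y * Y \<le> wt E Rd (C - D) * wt E Bl D" unfolding Y_def
        by (rule mult_mono[OF w1 w2]) (fact order_trans[OF nn w1], fact nn)
      moreover have "Y * Y \<le> wt E Rd D * wt E Bl (C - D)" unfolding Y_def
        by (rule mult_mono[OF w3 w4]) (fact order_trans[OF nn w3], fact nn)
      ultimately show ?thesis by simp
    qed
    finally have ineq: "X * real (card E) < wt E Rd (C - D) * wt E Bl D + wt E Rd D * wt E Bl (C - D)" .
    have "\<not> max_modularity_division Rd Bl E P"
      by (rule split_improves[OF _ _ _ divP CP DC _ _ m0 ineq[unfolded X_def]]) (use finRd[of k S L] finBl[of k S L] finE[of k S L f g] KR_D KR_C1 in \<open>auto simp: Rd_def Bl_def E_def\<close>)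
    thus False using mx by simp
  qed
qed

end
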